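(* Let $m\ge2$ be an integer and let $A$ be a left brace with $A^{(3)}=A^{m+1}=\{0\}$. Let $a\in A$, and define $a_1=a$ and $a_{j+1}=a*a_j$ for $j\ge1$. Then \[S=\Bigl\{\sum_{k=1}^m t_ka_k\;\Big|\; t_k\in\mathbb{Z},\ 1\le k\le m\Bigr\}\] is the subbrace of $A$ generated by $a$.
   Context: A left brace $(A,+,\cdot)$ is a set $A$ with two binary operations such that $(A,+)$ is an abelian group, $(A,\cdot)$ is a group, and $a(b+c)=ab-a+ac$ for all $a,b,c\in A$. In a left brace, $a*b=-a+ab-b$. For subsets $L,M\subseteq A$, $L*M$ is the subgroup of $(A,+)$ generated by $\{l*m\mid l\in L,m\in M\}$. Set $A^{(1)}=A$, $A^{(r+1)}=A^{(r)}*A$, and $A^1=A$, $A^{r+1}=A*A^r$ for $r\ge1$. A subbrace is a subset that is a subgroup of both $(A,+)$ and $(A,\cdot)$; the subbrace generated by $a$ is the intersection of all subbraces containing $a$. *)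

theory Defs
  imports Main
begin

text \<open>A left brace is modelled on a type 'a whose (abelian) additive group
structure is the type class ab_group_add; the multiplication is a separate
binary operation mul, required to form a group and to satisfy the brace law.\<close>

definition left_brace :: "('a::ab_group_add \<Rightarrow> 'a \<Rightarrow> 'a) \<Rightarrow> bool" where
  "left_brace mul \<longleftrightarrow>
     (\<forall>a b c. mul (mul a b) c = mul a (mul b c)) \<and>
     (\<exists>e. (\<forall>a. mul e a = a \<and> mul a e = a) \<and> (\<forall>a. \<exists>b. mul a b = e \<and> mul b a = e)) \<and>
     (\<forall>a b c. mul a (b + c) = mul a b - a + mul a c)"

definition brace_one :: "('a \<Rightarrow> 'a \<Rightarrow> 'a) \<Rightarrow> 'a" where
  "brace_one mul = (THE e. \<forall>a. mul e a = a \<and> mul a e = a)"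

definition bstar :: "('a::ab_group_add \<Rightarrow> 'a \<Rightarrow> 'a) \<Rightarrow> 'a \<Rightarrow> 'a \<Rightarrow> 'a" where
  "bstar mul a b = - a + mul a b - b"

definition is_add_subgroup :: "'a::ab_group_add set \<Rightarrow> bool" where
  "is_add_subgroup H \<longleftrightarrow> 0 \<in> H \<and> (\<forall>x\<in>H. \<forall>y\<in>H. x + y \<in> H) \<and> (\<forall>x\<in>H. - x \<in> H)"

definition is_mul_subgroup :: "('a \<Rightarrow> 'a \<Rightarrow> 'a) \<Rightarrow> 'a set \<Rightarrow> bool" where
  "is_mul_subgroup mul H \<longleftrightarrow> brace_one mul \<in> H \<and> (\<forall>x\<in>H. \<forall>y\<in>H. mul x y \<in> H) \<and>
     (\<forall>x\<in>H. \<forall>y. mul x y = brace_one mul \<longrightarrow> y \<in> H)"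

definition add_gen :: "'a::ab_group_add set \<Rightarrow> 'a set" where
  "add_gen X = \<Inter>{H. is_add_subgroup H \<and> X \<subseteq> H}"

definition star_set :: "('a::ab_group_add \<Rightarrow> 'a \<Rightarrow> 'a) \<Rightarrow> 'a set \<Rightarrow> 'a set \<Rightarrow> 'a set" where
  "star_set mul L M = add_gen {bstar mul l m | l m. l \<in> L \<and> m \<in> M}"

text \<open>rser mul r = A^(r), lser mul r = A^r, for r >= 1 (index 0 set to A, unused).\<close>
fun rser :: "('a::ab_group_add \<Rightarrow> 'a \<Rightarrow> 'a) \<Rightarrow> nat \<Rightarrow> 'a set" where
  "rser mul 0 = UNIV"
| "rser mul (Suc 0) = UNIV"
| "rser mul (Suc (Suc n)) = star_set mul (rser mul (Suc n)) UNIV"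

fun lser :: "('a::ab_group_add \<Rightarrow> 'a \<Rightarrow> 'a) \<Rightarrow> nat \<Rightarrow> 'a set" where
  "lser mul 0 = UNIV"
| "lser mul (Suc 0) = UNIV"
| "lser mul (Suc (Suc n)) = star_set mul UNIV (lser mul (Suc n))"

definition is_subbrace :: "('a::ab_group_add \<Rightarrow> 'a \<Rightarrow> 'a) \<Rightarrow> 'a set \<Rightarrow> bool" where
  "is_subbrace mul B \<longleftrightarrow> is_add_subgroup B \<and> is_mul_subgroup mul B"

definition subbrace_gen :: "('a::ab_group_add \<Rightarrow> 'a \<Rightarrow> 'a) \<Rightarrow> 'a \<Rightarrow> 'a set" where
  "subbrace_gen mul a = \<Inter>{B. is_subbrace mul B \<and> a \<in> B}"

fun aseq :: "('a::ab_group_add \<Rightarrow> 'a \<Rightarrow> 'a) \<Rightarrow> 'a \<Rightarrow> nat \<Rightarrow> 'a" where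
  "aseq mul a 0 = a"
| "aseq mul a (Suc 0) = a"
| "aseq mul a (Suc (Suc j)) = bstar mul a (aseq mul a (Suc j))"

definition zsmul :: "int \<Rightarrow> 'a::ab_group_add \<Rightarrow> 'a" where
  "zsmul t x = (if 0 \<le> t then ((+) x ^^ nat t) 0 else - (((+) x ^^ nat (- t)) 0))"

end

theory Submission
  imports Defs
begin

definition npow :: "nat \<Rightarrow> 'a::ab_group_add \<Rightarrow> 'a" where
  "npow n x = ((+) x ^^ n) 0"

lemma npow_0[simp]: "npow 0 x = 0" by (simp add: npow_def)
lemma npow_Suc: "npow (Suc n) x = x + npow n x" by (simp add: npow_def)
lemma npow_add: "npow (p+q) x = npow p x + npow q x"
  by (induction p) (simp_all add: npow_Suc add.assoc)

lemma zsmul_npow: "zsmul t x = (if 0 \<le> t then npow (nat t) x else - npow (nat (-t)) x)"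
  by (simp add: zsmul_def npow_def)

lemma zsmul_diff: "zsmul (int p - int q) x = npow p x - npow q x"
proof (cases "q \<le> p")
  case True
  then have "p = (p - q) + q" by simp
  then have "npow p x = npow (p-q) x + npow q x" by (metis npow_add)
  moreover have "nat (int p - int q) = p - q" using True by simp
  ultimately show ?thesis using True by (simp add: zsmul_npow)
next
  case False
  then have "q = (q - p) + p" by simp
  then have "npow q x = npow (q-p) x + npow p x" by (metis npow_add)
  moreover have "nat (-(int p - int q)) = q - p" using False by simp
  ultimately show ?thesis using False by (simp add: zsmul_npow)
qed

lemma zsmul_add: "zsmul (s + t) x = zsmul s x + zsmul t x"
proof -
  obtain p q where s: "s = int p - int q" by (rule int_diff_cases)
  obtain p' q' where t: "t = int p' - int q'" by (rule int_diff_cases)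
  have st: "s + t = int (p+p') - int (q+q')" using s t by simp
  have "zsmul (s+t) x = npow (p+p') x - npow (q+q') x" by (simp only: st zsmul_diff)
  also have "\<dots> = (npow p x - npow q x) + (npow p' x - npow q' x)"
    by (simp add: npow_add algebra_simps)
  also have "\<dots> = zsmul s x + zsmul t x" by (simp only: s t zsmul_diff)
  finally show ?thesis .
qed

lemma zsmul_neg: "zsmul (- t) x = - zsmul t x"
proof -
  obtain p q where s: "t = int p - int q" by (rule int_diff_cases)
  have "- t = int q - int p" using s by simp
  then show ?thesis by (simp only: s zsmul_diff) simp
qed

lemma zsmul_0[simp]: "zsmul 0 x = 0" by (simp add: zsmul_def)
lemma zsmul_1[simp]: "zsmul 1 x = x" by (simp add: zsmul_def)

lemma add_hom:
  assumes h: "\<And>u v. f (u+v) = f u + f v"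
  shows "f 0 = (0::'b::ab_group_add)" "f (-u) = - f u" "f (npow n x) = npow n (f x)"
    "f (zsmul t x) = zsmul t (f x)" "f (sum g A) = sum (\<lambda>i. f (g i)) A"
proof -
  show f0: "f 0 = (0::'b::ab_group_add)" using h[of 0 0] by simp
  have "f u + f (-u) = 0" using h[of u "-u"] f0 by simp
  then show fn: "f (-u) = - f u" by (simp add: eq_neg_iff_add_eq_0 add.commute)
  show fp: "f (npow n x) = npow n (f x)" for n x
    by (induction n) (simp_all add: npow_Suc h f0)
  show "f (zsmul t x) = zsmul t (f x)"
    using h[of "npow (nat (-t)) x" "- npow (nat (-t)) x"] f0
    by (simp add: zsmul_npow fp eq_neg_iff_add_eq_0 add.commute)
  show "f (sum g A) = sum (\<lambda>i. f (g i)) A"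
    by (induction A rule: infinite_finite_induct) (simp_all add: f0 h)
qed

lemma sg_zero: "is_add_subgroup H \<Longrightarrow> 0 \<in> H" by (simp add: is_add_subgroup_def)
lemma sg_add: "is_add_subgroup H \<Longrightarrow> x \<in> H \<Longrightarrow> y \<in> H \<Longrightarrow> x + y \<in> H"
  by (simp add: is_add_subgroup_def)
lemma sg_neg: "is_add_subgroup H \<Longrightarrow> x \<in> H \<Longrightarrow> - x \<in> H" by (simp add: is_add_subgroup_def)
lemma sg_diff: "is_add_subgroup H \<Longrightarrow> x \<in> H \<Longrightarrow> y \<in> H \<Longrightarrow> x - y \<in> H"
  by (metis diff_conv_add_uminus sg_add sg_neg)
lemma sg_npow: "is_add_subgroup H \<Longrightarrow> x \<in> H \<Longrightarrow> npow n x \<in> H"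
  by (induction n) (simp_all add: npow_Suc sg_zero sg_add)
lemma sg_zsmul: "is_add_subgroup H \<Longrightarrow> x \<in> H \<Longrightarrow> zsmul t x \<in> H"
  by (simp add: zsmul_npow sg_npow sg_neg)
lemma sg_sum: "is_add_subgroup H \<Longrightarrow> (\<And>i. i \<in> A \<Longrightarrow> g i \<in> H) \<Longrightarrow> sum g A \<in> H"
  by (induction A rule: infinite_finite_induct) (simp_all add: sg_zero sg_add)

lemma gen_in: "x \<in> X \<Longrightarrow> x \<in> add_gen X" by (auto simp: add_gen_def)
lemma gen_sg: "is_add_subgroup (add_gen X)"
  by (auto simp: add_gen_def is_add_subgroup_def)
lemma star_in: "l \<in> L \<Longrightarrow> c \<in> M \<Longrightarrow> bstar mul l c \<in> star_set mul L M"
  unfolding star_set_def by (rule gen_in) blast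

locale lbrace =
  fixes mul :: "'a::ab_group_add \<Rightarrow> 'a \<Rightarrow> 'a"
  assumes lb: "left_brace mul"
begin

lemma ldist: "mul a (b + c) = mul a b - a + mul a c" using lb unfolding left_brace_def by blast
lemma assoc: "mul (mul a b) c = mul a (mul b c)" using lb unfolding left_brace_def by blast

lemma mul_r0: "mul a 0 = a"
proof -
  have "mul a 0 = mul a 0 - a + mul a 0" using ldist[of a 0 0] by simp
  then show ?thesis by (metis add_diff_cancel diff_add_cancel add_cancel_right_left diff_eq_eq)
qed

lemma mul_l0: "mul 0 a = a"
proof -
  obtain e where e: "\<forall>a. mul e a = a \<and> mul a e = a" using lb unfolding left_brace_def by blast
  have "e = 0" using e mul_r0[of e] by metis
  then show ?thesis using e by simp
qed

lemma one: "brace_one mul = 0"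
  unfolding brace_one_def
proof (rule the_equality)
  show "\<forall>a. mul 0 a = a \<and> mul a 0 = a" by (simp add: mul_l0 mul_r0)
  fix e assume "\<forall>a. mul e a = a \<and> mul a e = a"
  then show "e = 0" using mul_r0[of e] by metis
qed

lemma mul_neg: "mul a (-b) = a + a - mul a b"
proof -
  have "a = mul a b - a + mul a (-b)" using ldist[of a b "-b"] by (simp add: mul_r0)
  then show ?thesis by (simp add: algebra_simps)
qed

lemma mul_bstar: "mul a b = a + b + bstar mul a b" by (simp add: bstar_def)

lemma bstar_add: "bstar mul x (b+c) = bstar mul x b + bstar mul x c"
  by (simp add: bstar_def ldist algebra_simps)

lemma bstar_0l[simp]: "bstar mul 0 c = 0" by (simp add: bstar_def mul_l0)
lemma bstar_0r[simp]: "bstar mul c 0 = 0" by (simp add: bstar_def mul_r0)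

lemma bstar_assoc:
  "bstar mul (mul a b) c = bstar mul a (bstar mul b c) + bstar mul b c + bstar mul a c"
proof -
  have "mul a (-b + mul b c + - c) = mul a (-b) - a + mul a (mul b c) - a + mul a (-c)"
    by (simp only: ldist)
  moreover have "-b + mul b c - c = -b + mul b c + - c" by simp
  ultimately have "mul a (-b + mul b c - c) = mul a (-b) - a + mul a (mul b c) - a + mul a (-c)"
    by simp
  then show ?thesis by (simp add: bstar_def mul_neg assoc algebra_simps)
qed

lemma triv:
  assumes "\<forall>c. bstar mul w c = 0"
  shows "bstar mul (w + v) c = bstar mul v c"
proof -
  have "mul w v = w + v" using assms mul_bstar[of w v] by simp
  then have "bstar mul (w + v) c = bstar mul (mul w v) c" by simp
  also have "\<dots> = bstar mul v c" using assms by (simp add: bstar_assoc)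
  finally show ?thesis .
qed

lemma radd:
  assumes "\<forall>c. bstar mul (- bstar mul a b) c = 0"
  shows "bstar mul (a+b) c = bstar mul a c + bstar mul b c + bstar mul a (bstar mul b c)"
proof -
  have "a + b = - bstar mul a b + mul a b" by (simp add: bstar_def)
  then have "bstar mul (a+b) c = bstar mul (mul a b) c" using triv[OF assms] by simp
  then show ?thesis by (simp add: bstar_assoc algebra_simps)
qed

lemma iter_add: "(bstar mul x ^^ j) (u + v) = (bstar mul x ^^ j) u + (bstar mul x ^^ j) v"
  by (induction j) (simp_all add: bstar_add)

end


locale setting = lbrace mul for mul :: "'a::ab_group_add \<Rightarrow> 'a \<Rightarrow> 'a" +
  fixes m :: nat and a :: 'a
  assumes m2: "m \<ge> 2" and r3: "rser mul 3 = {0}" and lm: "lser mul (m+1) = {0}"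
begin

definition S where
  "S = {x. \<exists>t :: nat \<Rightarrow> int. x = (\<Sum>k = 1..m. zsmul (t k) (aseq mul a k))}"

lemma r2: "rser mul 2 = star_set mul UNIV UNIV" by (simp add: numeral_2_eq_2)
lemma r3': "rser mul 3 = star_set mul (rser mul 2) UNIV" by (simp add: numeral_3_eq_3 numeral_2_eq_2)

lemma A2_kill: "w \<in> rser mul 2 \<Longrightarrow> bstar mul w c = 0"
  using star_in[of w "rser mul 2" c UNIV mul] r3 r3' by auto

lemma A2_sg: "is_add_subgroup (rser mul 2)" by (simp add: r2 star_set_def gen_sg)
lemma bstar_A2: "bstar mul x y \<in> rser mul 2" by (simp add: r2 star_in)

lemma aseq_iter: "aseq mul a (Suc k) = (bstar mul a ^^ k) a"
  by (induction k) simp_all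

lemma iter_lser: "(bstar mul x ^^ k) z \<in> lser mul (Suc k)"
proof (induction k)
  case 0 then show ?case by simp
next
  case (Suc k) then show ?case by (simp add: star_in)
qed

lemma iter_zero: "(bstar mul x ^^ m) z = 0" using iter_lser[where k=m and x=x and z=z] lm by simp

lemma aseq_m1: "aseq mul a (Suc m) = 0" using aseq_iter iter_zero by simp

lemma aseq_A2: "k \<ge> 2 \<Longrightarrow> aseq mul a k \<in> rser mul 2"
proof -
  assume "k \<ge> 2"
  then obtain j where "k = Suc (Suc j)" by (metis add_2_eq_Suc le_Suc_ex)
  then show ?thesis by (simp add: bstar_A2)
qed

lemma L:
  assumes H: "is_add_subgroup H" and fx: "\<forall>c\<in>H. bstar mul x c \<in> H"
    and z: "z + bstar mul x z \<in> H"
  shows "z \<in> H"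
proof -
  have mapH: "c \<in> H \<Longrightarrow> (bstar mul x ^^ j) c \<in> H" for c j
    by (induction j) (simp_all add: fx)
  have "k \<le> m \<Longrightarrow> (bstar mul x ^^ (m - k)) z \<in> H" for k
  proof (induction k)
    case 0 then show ?case using iter_zero sg_zero[OF H] by simp
  next
    case (Suc k)
    define j where "j = m - Suc k"
    have mk: "m - k = Suc j" using Suc.prems j_def by simp
    have IH: "(bstar mul x ^^ (Suc j)) z \<in> H" using Suc mk by simp
    have "(bstar mul x ^^ j) (z + bstar mul x z) \<in> H" using mapH z by blast
    moreover have "(bstar mul x ^^ j) (z + bstar mul x z) = (bstar mul x ^^ j) z + (bstar mul x ^^ (Suc j)) z"
      by (simp add: iter_add funpow_swap1)
    ultimately have "(bstar mul x ^^ j) z + (bstar mul x ^^ (Suc j)) z \<in> H" by simp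
    then have "(bstar mul x ^^ j) z + (bstar mul x ^^ (Suc j)) z - (bstar mul x ^^ (Suc j)) z \<in> H"
      using sg_diff[OF H] IH by blast
    then show ?case using j_def by simp
  qed
  from this[of m] show ?thesis by simp
qed

lemma S_sg: "is_add_subgroup S"
  unfolding is_add_subgroup_def
proof (intro conjI ballI)
  show "0 \<in> S" unfolding S_def by (rule CollectI, rule exI[of _ "\<lambda>_. 0"]) simp
next
  fix x y assume "x \<in> S" "y \<in> S"
  then obtain t s where t: "x = (\<Sum>k = 1..m. zsmul (t k) (aseq mul a k))"
    and s: "y = (\<Sum>k = 1..m. zsmul (s k) (aseq mul a k))" unfolding S_def by blast
  have e: "x + y = (\<Sum>k = 1..m. zsmul (t k + s k) (aseq mul a k))"
    by (simp add: t s zsmul_add sum.distrib)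
  show "x + y \<in> S" unfolding S_def mem_Collect_eq by (rule exI[of _ "\<lambda>k. t k + s k"], rule e)
next
  fix x assume "x \<in> S"
  then obtain t where t: "x = (\<Sum>k = 1..m. zsmul (t k) (aseq mul a k))"
    unfolding S_def by blast
  have e: "- x = (\<Sum>k = 1..m. zsmul (- t k) (aseq mul a k))"
    by (simp add: t zsmul_neg sum_negf)
  show "- x \<in> S" unfolding S_def mem_Collect_eq by (rule exI[of _ "\<lambda>k. - t k"], rule e)
qed

lemma gen_in_S: "1 \<le> k \<Longrightarrow> k \<le> m \<Longrightarrow> zsmul t (aseq mul a k) \<in> S"
proof -
  assume k: "1 \<le> k" "k \<le> m"
  have "(\<Sum>j=1..m. zsmul (if j=k then t else 0) (aseq mul a j))
     = (\<Sum>j=1..m. if j = k then zsmul t (aseq mul a k) else 0)"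
    by (rule sum.cong) auto
  also have "\<dots> = zsmul t (aseq mul a k)" using k by (simp add: sum.delta)
  finally have e: "(\<Sum>j=1..m. zsmul (if j=k then t else 0) (aseq mul a j)) = zsmul t (aseq mul a k)" .
  show ?thesis unfolding S_def mem_Collect_eq by (rule exI[of _ "\<lambda>j. if j=k then t else 0"], rule e[symmetric])
qed

lemma S_sub: "is_add_subgroup H \<Longrightarrow> (\<And>k. 1 \<le> k \<Longrightarrow> k \<le> m \<Longrightarrow> aseq mul a k \<in> H) \<Longrightarrow> S \<subseteq> H"
  unfolding S_def by (auto intro!: sg_sum sg_zsmul)

lemma aseq_S: "1 \<le> k \<Longrightarrow> k \<le> Suc m \<Longrightarrow> aseq mul a k \<in> S"
proof -
  assume k: "1 \<le> k" "k \<le> Suc m"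
  show ?thesis
  proof (cases "k = Suc m")
    case True then show ?thesis using aseq_m1 sg_zero[OF S_sg] by simp
  next
    case False then show ?thesis using gen_in_S[of k 1] k by simp
  qed
qed

lemma a_T: "c \<in> S \<Longrightarrow> bstar mul a c \<in> S"
proof -
  assume "c \<in> S"
  then obtain t where t: "c = (\<Sum>k = 1..m. zsmul (t k) (aseq mul a k))"
    unfolding S_def by blast
  have h: "\<And>u v. bstar mul a (u+v) = bstar mul a u + bstar mul a v" by (rule bstar_add)
  have "bstar mul a c = (\<Sum>k = 1..m. zsmul (t k) (bstar mul a (aseq mul a k)))"
    by (simp add: t add_hom[OF h])
  also have "\<dots> \<in> S"
  proof (rule sg_sum[OF S_sg])
    fix k assume "k \<in> {1..m}"
    then obtain k' where k': "k = Suc k'" "Suc k' \<le> m" by (cases k) auto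
    have "bstar mul a (aseq mul a k) = aseq mul a (Suc k)" using k' by simp
    then show "zsmul (t k) (bstar mul a (aseq mul a k)) \<in> S"
      using aseq_S[of "Suc k"] k' by (simp add: sg_zsmul[OF S_sg])
  qed
  finally show ?thesis .
qed

definition T where "T = {x. \<forall>c\<in>S. bstar mul x c \<in> S}"

lemma kill2: "\<forall>c. bstar mul (- bstar mul x y) c = 0"
  by (intro allI A2_kill sg_neg[OF A2_sg bstar_A2])

lemma T_sg: "is_add_subgroup T"
  unfolding is_add_subgroup_def
proof (intro conjI ballI)
  show "0 \<in> T" unfolding T_def using sg_zero[OF S_sg] by simp
next
  fix x y assume xy: "x \<in> T" "y \<in> T"
  show "x + y \<in> T" unfolding T_def mem_Collect_eq
  proof
    fix c assume c: "c \<in> S"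
    have yc: "bstar mul y c \<in> S" using xy(2) c unfolding T_def by blast
    have xc: "bstar mul x c \<in> S" using xy(1) c unfolding T_def by blast
    have xyc: "bstar mul x (bstar mul y c) \<in> S" using xy(1) yc unfolding T_def by blast
    show "bstar mul (x+y) c \<in> S" unfolding radd[OF kill2]
      by (intro sg_add[OF S_sg] xc yc xyc)
  qed
next
  fix x assume x: "x \<in> T"
  have fx: "\<forall>d\<in>S. bstar mul x d \<in> S" using x unfolding T_def by blast
  show "- x \<in> T" unfolding T_def mem_Collect_eq
  proof
    fix c assume c: "c \<in> S"
    define z where "z = bstar mul (-x) c"
    have "0 = bstar mul (x + - x) c" by simp
    also have "\<dots> = bstar mul x c + z + bstar mul x z" unfolding z_def by (rule radd[OF kill2])
    finally have e: "z + bstar mul x z = - bstar mul x c"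
      by (simp add: algebra_simps eq_neg_iff_add_eq_0)
    have "z + bstar mul x z \<in> S" unfolding e using fx c by (intro sg_neg[OF S_sg]) blast
    then have "z \<in> S" by (rule L[OF S_sg fx])
    then show "bstar mul (-x) c \<in> S" unfolding z_def .
  qed
qed

lemma S_T: "S \<subseteq> T"
proof (rule S_sub[OF T_sg])
  fix k assume k: "1 \<le> k" "k \<le> m"
  show "aseq mul a k \<in> T"
  proof (cases "k = 1")
    case True then show ?thesis using a_T unfolding T_def by simp
  next
    case False then have "k \<ge> 2" using k by simp
    then have "\<And>c. bstar mul (aseq mul a k) c = 0" using A2_kill aseq_A2 by blast
    then show ?thesis using sg_zero[OF S_sg] unfolding T_def by simp
  qed
qed

lemma S_star: "x \<in> S \<Longrightarrow> c \<in> S \<Longrightarrow> bstar mul x c \<in> S" using S_T unfolding T_def by blast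

lemma main: "S = subbrace_gen mul a"
proof
  show "S \<subseteq> subbrace_gen mul a"
    unfolding subbrace_gen_def
  proof (rule Inter_greatest)
    fix B assume "B \<in> {B. is_subbrace mul B \<and> a \<in> B}"
    then have B: "is_add_subgroup B" "is_mul_subgroup mul B" "a \<in> B"
      by (auto simp: is_subbrace_def)
    have Bm: "x \<in> B \<Longrightarrow> y \<in> B \<Longrightarrow> mul x y \<in> B" for x y
      using B(2) unfolding is_mul_subgroup_def by blast
    have as: "aseq mul a (Suc k) \<in> B" for k
    proof (induction k)
      case 0 then show ?case using B by simp
    next
      case (Suc k)
      have m1: "mul a (aseq mul a (Suc k)) \<in> B" by (rule Bm[OF B(3) Suc])
      have "- a + mul a (aseq mul a (Suc k)) - aseq mul a (Suc k) \<in> B"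
        by (intro sg_diff[OF B(1)] sg_add[OF B(1)] sg_neg[OF B(1)] B(3) m1 Suc)
      then show ?case by (simp add: bstar_def)
    qed
    have "aseq mul a k \<in> B" if k1: "1 \<le> k" for k
    proof -
      obtain j where "k = Suc j" using k1 by (cases k) auto
      then show ?thesis using as by simp
    qed
    then show "S \<subseteq> B" using S_sub[OF B(1)] by blast
  qed
next
  have aS: "a \<in> S" using aseq_S[of 1] m2 by simp
  have "is_mul_subgroup mul S"
    unfolding is_mul_subgroup_def one
  proof (intro conjI ballI allI impI)
    show "0 \<in> S" using sg_zero[OF S_sg] .
  next
    fix x y assume xy: "x \<in> S" "y \<in> S"
    have "x + y + bstar mul x y \<in> S"
      by (intro sg_add[OF S_sg] xy S_star)
    then show "mul x y \<in> S" by (simp add: mul_bstar[of x y])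
  next
    fix x y assume x: "x \<in> S" and xy: "mul x y = 0"
    have e: "y + bstar mul x y = - x" using xy by (simp add: bstar_def)
    have "y + bstar mul x y \<in> S" unfolding e by (rule sg_neg[OF S_sg x])
    moreover have "\<forall>d\<in>S. bstar mul x d \<in> S" using S_star x by blast
    ultimately show "y \<in> S" using L[OF S_sg] by blast
  qed
  then have "S \<in> {B. is_subbrace mul B \<and> a \<in> B}"
    using S_sg aS by (simp add: is_subbrace_def)
  then show "subbrace_gen mul a \<subseteq> S" unfolding subbrace_gen_def by blast
qed

end

theorem theoremD:
  fixes mul :: "'a::ab_group_add \<Rightarrow> 'a \<Rightarrow> 'a" and m :: nat and a :: 'a
  assumes "m \<ge> 2"
    and "left_brace mul"
    and "rser mul 3 = {0}"
    and "lser mul (m + 1) = {0}"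
  shows "{x. \<exists>t :: nat \<Rightarrow> int. x = (\<Sum>k = 1..m. zsmul (t k) (aseq mul a k))}
           = subbrace_gen mul a"
proof -
  interpret setting mul m a
    using assms by (simp add: setting_def setting_axioms_def lbrace_def)
  show ?thesis using main unfolding S_def .
qed

end
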